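(* Let $\mathscr{H}$ be a complex Hilbert space and let $N(\cdot)$ be a norm on $\mathbb{B}(\mathscr{H})$ which is an algebra norm ($N(XY)\leq N(X)N(Y)$ for all $X,Y\in\mathbb{B}(\mathscr{H})$) and self-adjoint ($N(X^* )=N(X)$ for all $X\in\mathbb{B}(\mathscr{H})$). Then for all $B,C\in\mathbb{B}(\mathscr{H})$, $$\frac18N(C^*C+B^*B)+\frac12\max\{w_N(B),w_N(C)\}\,|w_N(B+C)-w_N(B-C)|\leq w_{(N,e)}^2(B,C).$$
   Context: For $T\in\mathbb{B}(\mathscr{H})$: $\Re(T)=\frac12(T+T^* )$ and $w_N(T)=\sup_{\theta\in\mathbb{R}}N(\Re(e^{i\theta}T))$. For $B,C\in\mathbb{B}(\mathscr{H})$, $w_{(N,e)}(B,C)=\sup_{\lambda_1,\lambda_2\in\mathbb{C},\ |\lambda_1|^2+|\lambda_2|^2\leq 1}\sup_{\theta\in\mathbb{R}} N(\Re(e^{i\theta}(\lambda_1B+\lambda_2C)))$. *)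

theory Defs
  imports "HOL-Analysis.Analysis"
begin

text \<open>Complex Hilbert spaces (not available in the distribution): a real Banach space
carrying a complex scalar multiplication compatible with the real one and a complex
inner product (conjugate-linear in the first argument) inducing the norm.\<close>

class chilbert_space = real_normed_vector + complete_space +
  fixes scaleC :: "complex \<Rightarrow> 'a \<Rightarrow> 'a"
    and cinner :: "'a \<Rightarrow> 'a \<Rightarrow> complex"
  assumes scaleC_add_right: "scaleC a (x + y) = scaleC a x + scaleC a y"
    and scaleC_add_left: "scaleC (a + b) x = scaleC a x + scaleC b x"
    and scaleC_scaleC: "scaleC a (scaleC b x) = scaleC (a * b) x"
    and scaleC_one: "scaleC 1 x = x"
    and scaleR_scaleC: "scaleR r x = scaleC (complex_of_real r) x"
    and cinner_commute: "cinner x y = cnj (cinner y x)"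
    and cinner_add_left: "cinner (x + y) z = cinner x z + cinner y z"
    and cinner_scaleC_left: "cinner (scaleC a x) y = cnj a * cinner x y"
    and norm_cinner: "norm x = sqrt (Re (cinner x x))"

definition BH :: "('a::chilbert_space \<Rightarrow> 'a) set" where
  "BH = {T. (\<forall>x y. T (x + y) = T x + T y) \<and> (\<forall>c x. T (scaleC c x) = scaleC c (T x))
            \<and> (\<exists>K. \<forall>x. norm (T x) \<le> norm x * K)}"

definition op_add :: "('a::chilbert_space \<Rightarrow> 'a) \<Rightarrow> ('a \<Rightarrow> 'a) \<Rightarrow> 'a \<Rightarrow> 'a" where
  "op_add X Y = (\<lambda>x. X x + Y x)"

definition op_scale :: "complex \<Rightarrow> ('a::chilbert_space \<Rightarrow> 'a) \<Rightarrow> 'a \<Rightarrow> 'a" where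
  "op_scale c X = (\<lambda>x. scaleC c (X x))"

definition adj :: "('a::chilbert_space \<Rightarrow> 'a) \<Rightarrow> 'a \<Rightarrow> 'a" where
  "adj T = (THE S. S \<in> BH \<and> (\<forall>x y. cinner (T x) y = cinner x (S y)))"

definition ReOp :: "('a::chilbert_space \<Rightarrow> 'a) \<Rightarrow> 'a \<Rightarrow> 'a" where
  "ReOp T = op_scale (1/2) (op_add T (adj T))"

definition is_norm_on_BH :: "(('a::chilbert_space \<Rightarrow> 'a) \<Rightarrow> real) \<Rightarrow> bool" where
  "is_norm_on_BH N \<longleftrightarrow>
     (\<forall>X\<in>BH. 0 \<le> N X) \<and>
     (\<forall>X\<in>BH. N X = 0 \<longleftrightarrow> X = (\<lambda>_. 0)) \<and>
     (\<forall>X\<in>BH. \<forall>c. N (op_scale c X) = cmod c * N X) \<and>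
     (\<forall>X\<in>BH. \<forall>Y\<in>BH. N (op_add X Y) \<le> N X + N Y)"

definition wN :: "(('a::chilbert_space \<Rightarrow> 'a) \<Rightarrow> real) \<Rightarrow> ('a \<Rightarrow> 'a) \<Rightarrow> real" where
  "wN N T = (SUP \<theta>::real. N (ReOp (op_scale (cis \<theta>) T)))"

definition wNe :: "(('a::chilbert_space \<Rightarrow> 'a) \<Rightarrow> real) \<Rightarrow> ('a \<Rightarrow> 'a) \<Rightarrow> ('a \<Rightarrow> 'a) \<Rightarrow> real" where
  "wNe N B C = (SUP l \<in> {(l1, l2). (cmod l1)\<^sup>2 + (cmod l2)\<^sup>2 \<le> 1}.
                 SUP \<theta>::real. N (ReOp (op_scale (cis \<theta>)
                    (op_add (op_scale (fst l) B) (op_scale (snd l) C)))))"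

end

theory Submission imports Defs begin

context begin
lemma ci_add_right: "cinner x (y + z) = cinner x y + cinner x (z::'a::chilbert_space)"
  using cinner_commute[of x "y+z"] cinner_commute[of y x] cinner_commute[of z x] by (simp add: cinner_add_left)
lemma ci_scale_right: "cinner x (scaleC c y) = c * cinner x (y::'a::chilbert_space)"
  using cinner_commute[of x "scaleC c y"] cinner_commute[of y x] by (simp add: cinner_scaleC_left)
lemma sc_zero_right[simp]: "scaleC c (0::'a::chilbert_space) = 0"
  using scaleC_add_right[of c 0 0] by (simp only: add_0_right add_cancel_right_right)
lemma sc_zero_left[simp]: "scaleC 0 (x::'a::chilbert_space) = 0"
  using scaleR_scaleC[of 0 x, symmetric] by simp
lemma sc_minus1: "scaleC (-1) (x::'a::chilbert_space) = - x"
  using scaleR_scaleC[of "-1" x, symmetric] by simp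
lemma ci_zero_left[simp]: "cinner 0 (y::'a::chilbert_space) = 0"
  using cinner_add_left[of 0 0 y] by (simp only: add_0_right add_cancel_right_right)
lemma ci_zero_right[simp]: "cinner y (0::'a::chilbert_space) = 0"
  using ci_add_right[of y 0 0] by (simp only: add_0_right add_cancel_right_right)
lemma ci_minus_left: "cinner (- x) (y::'a::chilbert_space) = - cinner x y"
  using cinner_add_left[of x "-x" y, symmetric] by (simp add: eq_neg_iff_add_eq_0 add.commute)
lemma ci_minus_right: "cinner y (- x::'a::chilbert_space) = - cinner y x"
  using ci_add_right[of y x "-x", symmetric] by (simp add: eq_neg_iff_add_eq_0 add.commute)
lemma ci_diff_left: "cinner (x - z) (y::'a::chilbert_space) = cinner x y - cinner z y"
  by (simp only: cinner_add_left ci_minus_left diff_conv_add_uminus)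
lemma ci_diff_right: "cinner y (x - z::'a::chilbert_space) = cinner y x - cinner y z"
  by (simp only: ci_add_right ci_minus_right diff_conv_add_uminus)
lemma ci_self_Re_nonneg: "0 \<le> Re (cinner x (x::'a::chilbert_space))"
  by (metis norm_cinner norm_ge_zero real_sqrt_ge_0_iff)
lemma norm_sq_ci: "(norm x)\<^sup>2 = Re (cinner x (x::'a::chilbert_space))"
  using ci_self_Re_nonneg[of x] by (simp add: norm_cinner)
lemma ci_self_Im: "Im (cinner x (x::'a::chilbert_space)) = 0"
proof -
  have "Im (cinner x x) = - Im (cinner x x)" using cinner_commute[of x x] by (metis cnj.sel(2))
  then show ?thesis by simp
qed
lemma ci_scaleR_right: "cinner x (scaleR r y) = of_real r * cinner x (y::'a::chilbert_space)"
  by (simp add: scaleR_scaleC ci_scale_right)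
lemma Re_ci_commute: "Re (cinner y (x::'a::chilbert_space)) = Re (cinner x y)"
  by (metis cinner_commute cnj.sel(1))
lemma norm_add_sq: "(norm (x + y))\<^sup>2 = (norm x)\<^sup>2 + 2 * Re (cinner x y) + (norm (y::'a::chilbert_space))\<^sup>2"
  unfolding norm_sq_ci using Re_ci_commute[of x y]
  by (simp add: cinner_add_left ci_add_right)
lemma ci_eqI: "(\<And>x. cinner u x = cinner v (x::'a::chilbert_space)) \<Longrightarrow> u = v"
proof -
  assume h: "\<And>x. cinner u x = cinner v x"
  have "cinner (u - v) (u - v) = 0" using h[of "u - v"] by (simp add: ci_diff_left)
  then have "(norm (u - v))\<^sup>2 = 0" by (simp add: norm_sq_ci)
  then show "u = v" by simp
qed
lemma CS_Re: "\<bar>Re (cinner x (y::'a::chilbert_space))\<bar> \<le> norm x * norm y"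
proof (cases "y = 0")
  case True then show ?thesis by simp
next
  case False
  define r where "r = Re (cinner x y)"
  have ny: "norm y > 0" using False by simp
  have "0 \<le> (norm (x + scaleR (- r / (norm y)\<^sup>2) y))\<^sup>2" by simp
  also have "\<dots> = (norm x)\<^sup>2 - r\<^sup>2 / (norm y)\<^sup>2"
    unfolding norm_add_sq using ny
    by (simp add: ci_scaleR_right ci_minus_right r_def power2_eq_square field_simps)
  finally have "r\<^sup>2 \<le> (norm x)\<^sup>2 * (norm y)\<^sup>2" using ny by (simp add: field_simps)
  then have "r\<^sup>2 \<le> (norm x * norm y)\<^sup>2" by (simp add: power_mult_distrib)
  then have "\<bar>r\<bar> \<le> \<bar>norm x * norm y\<bar>" by (simp only: abs_le_square_iff)
  then show ?thesis unfolding r_def by simp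
qed
lemma riesz:
  fixes g :: "'a::chilbert_space \<Rightarrow> complex"
  assumes gadd: "\<And>x y. g (x + y) = g x + g y"
    and gsc: "\<And>c x. g (scaleC c x) = c * g x"
    and gb: "\<And>x. Re (g x) \<le> K * norm x"
  shows "\<exists>z. \<forall>x. g x = cinner z x"
proof -
  have g0: "g 0 = 0" using gsc[of 0 0] by simp
  have gminus: "g (-x) = - g x" for x using gsc[of "-1" x] by (simp add: sc_minus1)
  have gR: "g (scaleR r x) = of_real r * g x" for r x by (simp add: scaleR_scaleC gsc)
  have gabs: "\<bar>Re (g x)\<bar> \<le> K * norm x" for x using gb[of x] gb[of "-x"] gminus[of x] by auto
  define E where "E x = (norm x)\<^sup>2 - 2 * Re (g x)" for x
  have Elow: "- (K\<^sup>2) \<le> E x" for x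
    unfolding E_def using gb[of x] zero_le_power2[of "norm x - K"] by (simp add: power2_eq_square algebra_simps)
  define \<mu> where "\<mu> = Inf (range E)"
  have bdd: "bdd_below (range E)" by (rule bdd_belowI2[where m="-(K\<^sup>2)"]) (rule Elow)
  have \<mu>le: "\<mu> \<le> E x" for x unfolding \<mu>_def by (rule cInf_lower) (auto simp: bdd)
  have ex: "\<exists>x. E x < \<mu> + 1 / real (Suc n)" for n
  proof (rule ccontr)
    assume "\<not> ?thesis"
    then have "\<forall>x. \<mu> + 1 / real (Suc n) \<le> E x" by (auto simp: not_less)
    then have "\<mu> + 1 / real (Suc n) \<le> \<mu>" unfolding \<mu>_def by (intro cInf_greatest) auto
    then show False by simp
  qed
  obtain xs where xs: "\<forall>n. E (xs n) < \<mu> + 1 / real (Suc n)"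
    using choice[of "\<lambda>n x. E x < \<mu> + 1 / real (Suc n)"] ex by blast
  have par: "(norm (x - y))\<^sup>2 \<le> 2 * E x + 2 * E y - 4 * \<mu>" for x y
  proof -
    define m where "m = scaleR (1/2) (x + y)"
    have n1: "(norm (x + y))\<^sup>2 = (norm x)\<^sup>2 + 2 * Re (cinner x y) + (norm y)\<^sup>2" by (rule norm_add_sq)
    have n2: "(norm (x - y))\<^sup>2 = (norm x)\<^sup>2 - 2 * Re (cinner x y) + (norm y)\<^sup>2"
      using norm_add_sq[of x "-y"] by (simp add: ci_minus_right)
    have nm: "norm m = norm (x + y) / 2" by (simp add: m_def)
    have gm: "Re (g m) = (Re (g x) + Re (g y)) / 2" by (simp add: m_def gR gadd)
    have Em: "E m = (norm (x + y))\<^sup>2 / 4 - Re (g x) - Re (g y)"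
      by (simp add: E_def nm gm power_divide add_divide_distrib)
    show ?thesis using \<mu>le[of m] Em n1 n2 unfolding E_def by (simp add: algebra_simps)
  qed
  have cau: "Cauchy xs"
  proof (rule CauchyI)
    fix e :: real assume e: "0 < e"
    obtain M :: nat where M: "4 / e\<^sup>2 < real M" using reals_Archimedean2 by blast
    have M2: "4 / real (Suc M) < e\<^sup>2"
    proof -
      have "4 < e\<^sup>2 * real M" using M e by (simp add: field_simps)
      also have "\<dots> \<le> e\<^sup>2 * real (Suc M)" using e by simp
      finally show ?thesis by (simp add: field_simps)
    qed
    show "\<exists>M. \<forall>m\<ge>M. \<forall>n\<ge>M. norm (xs m - xs n) < e"
    proof (intro exI allI impI)
      fix m n assume mn: "M \<le> m" "M \<le> n"
      have a: "2 / real (Suc m) \<le> 2 / real (Suc M)" using mn by (simp add: frac_le)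
      have b: "2 / real (Suc n) \<le> 2 / real (Suc M)" using mn by (simp add: frac_le)
      have "(norm (xs m - xs n))\<^sup>2 < e\<^sup>2"
        using par[of "xs m" "xs n"] xs[rule_format, of m] xs[rule_format, of n] a b M2 by simp
      then show "norm (xs m - xs n) < e" using e by (meson power_less_imp_less_base less_le)
    qed
  qed
  then obtain z where z: "xs \<longlonglongrightarrow> z" using Cauchy_convergent_iff convergent_def by blast
  have lim1: "(\<lambda>n. E (xs n)) \<longlonglongrightarrow> E z"
  proof -
    have a: "(\<lambda>n. (norm (xs n))\<^sup>2) \<longlonglongrightarrow> (norm z)\<^sup>2" by (intro tendsto_intros z)
    have "(\<lambda>n. Re (g (xs n - z))) \<longlonglongrightarrow> 0"
    proof (rule Lim_null_comparison)
      show "\<forall>\<^sub>F n in sequentially. norm (Re (g (xs n - z))) \<le> K * norm (xs n - z)"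
        using gabs by simp
      have "(\<lambda>n. norm (xs n - z)) \<longlonglongrightarrow> 0" by (intro tendsto_norm_zero LIM_zero z)
      then show "(\<lambda>n. K * norm (xs n - z)) \<longlonglongrightarrow> 0" using tendsto_mult_right_zero by blast
    qed
    moreover have "Re (g (xs n - z)) = Re (g (xs n)) - Re (g z)" for n
      using gadd[of "xs n" "-z"] gminus[of z] by simp
    ultimately have "(\<lambda>n. Re (g (xs n)) - Re (g z)) \<longlonglongrightarrow> 0" by simp
    then have "(\<lambda>n. Re (g (xs n)) - Re (g z) + Re (g z)) \<longlonglongrightarrow> 0 + Re (g z)" by (intro tendsto_intros)
    then have b: "(\<lambda>n. Re (g (xs n))) \<longlonglongrightarrow> Re (g z)" by simp
    show ?thesis unfolding E_def by (intro tendsto_intros a b)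
  qed
  have lim2: "(\<lambda>n. E (xs n)) \<longlonglongrightarrow> \<mu>"
  proof (rule tendsto_sandwich[where f="\<lambda>n. \<mu>" and h="\<lambda>n. \<mu> + 1 / real (Suc n)"])
    show "\<forall>\<^sub>F n in sequentially. \<mu> \<le> E (xs n)" using \<mu>le by simp
    show "\<forall>\<^sub>F n in sequentially. E (xs n) \<le> \<mu> + 1 / real (Suc n)" using xs by (simp add: less_imp_le)
    show "(\<lambda>n. \<mu>) \<longlonglongrightarrow> \<mu>" by simp
    have "(\<lambda>n. 1 / real (Suc n)) \<longlonglongrightarrow> 0" using LIMSEQ_Suc[OF lim_1_over_n] by simp
    then have "(\<lambda>n. \<mu> + 1 / real (Suc n)) \<longlonglongrightarrow> \<mu> + 0" by (intro tendsto_intros)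
    then show "(\<lambda>n. \<mu> + 1 / real (Suc n)) \<longlonglongrightarrow> \<mu>" by simp
  qed
  have Ez: "E z = \<mu>" using LIMSEQ_unique[OF lim1 lim2] .
  have var: "Re (cinner z h) = Re (g h)" for h
  proof (cases "h = 0")
    case True then show ?thesis by (simp add: g0)
  next
    case False
    define d where "d = Re (cinner z h) - Re (g h)"
    have key: "0 \<le> 2 * t * d + t\<^sup>2 * (norm h)\<^sup>2" for t
    proof -
      have "E (z + scaleR t h) = E z + 2 * t * d + t\<^sup>2 * (norm h)\<^sup>2"
        unfolding E_def d_def norm_add_sq
        by (simp add: ci_scaleR_right gadd gR power_mult_distrib algebra_simps)
      then show ?thesis using \<mu>le[of "z + scaleR t h"] Ez by simp
    qed
    have hp: "0 < (norm h)\<^sup>2" using False by simp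
    have "0 \<le> 2 * (- d / (norm h)\<^sup>2) * d + (- d / (norm h)\<^sup>2)\<^sup>2 * (norm h)\<^sup>2" by (rule key)
    also have "\<dots> = - (d\<^sup>2 / (norm h)\<^sup>2)" using hp by (simp add: field_simps power2_eq_square)
    finally have "d\<^sup>2 / (norm h)\<^sup>2 \<le> 0" by simp
    then have "d\<^sup>2 \<le> 0" using hp by (simp add: divide_le_0_iff)
    then have "d = 0" by simp
    then show ?thesis unfolding d_def by simp
  qed
  have "g h = cinner z h" for h
  proof (rule complex_eqI)
    show "Re (g h) = Re (cinner z h)" using var[of h] by simp
    have "Re (cinner z (scaleC \<i> h)) = Re (g (scaleC \<i> h))" by (rule var)
    then show "Im (g h) = Im (cinner z h)" by (simp add: ci_scale_right gsc)
  qed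
  then show ?thesis by blast
qed

lemma norm_scaleC: "norm (scaleC c (x::'a::chilbert_space)) = cmod c * norm x"
proof -
  have "(norm (scaleC c x))\<^sup>2 = Re (cnj c * c * cinner x x)"
    by (simp add: norm_sq_ci cinner_scaleC_left ci_scale_right ci_self_Im algebra_simps)
  also have "cnj c * c = complex_of_real ((cmod c)\<^sup>2)" using complex_norm_square[of c] by (simp add: mult.commute)
  also have "Re (complex_of_real ((cmod c)\<^sup>2) * cinner x x) = (cmod c * norm x)\<^sup>2"
    by (simp add: norm_sq_ci power_mult_distrib)
  finally show ?thesis by (simp add: power2_eq_imp_eq)
qed

lemma BH_add_apply: "T \<in> BH \<Longrightarrow> T (x + y) = T x + T y" by (simp add: BH_def)
lemma BH_scale_apply: "T \<in> BH \<Longrightarrow> T (scaleC c x) = scaleC c (T x)" by (simp add: BH_def)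
lemma BH_bound: "T \<in> BH \<Longrightarrow> \<exists>K\<ge>0. \<forall>x. norm (T x) \<le> norm x * K"
proof -
  assume "T \<in> BH"
  then obtain K where K: "\<forall>x. norm (T x) \<le> norm x * K" by (auto simp: BH_def)
  have "\<forall>x. norm (T x) \<le> norm x * max K 0"
    using K by (meson max.cobounded1 mult_left_mono norm_ge_zero order_trans)
  then show ?thesis by (intro exI[of _ "max K 0"]) auto
qed
lemma BH_zero: "T \<in> BH \<Longrightarrow> T 0 = (0::'a::chilbert_space)"
  using BH_add_apply[of T 0 0] by (simp only: add_0_right add_cancel_right_right)
lemma BH_minus: "T \<in> BH \<Longrightarrow> T (- x) = - T (x::'a::chilbert_space)"
  using BH_scale_apply[of T "-1" x] by (simp add: sc_minus1)
lemma BH_diff: "T \<in> BH \<Longrightarrow> T (x - y) = T x - T (y::'a::chilbert_space)"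
  using BH_add_apply[of T x "-y"] BH_minus[of T y] by simp

lemma op_add_apply[simp]: "op_add X Y x = X x + Y x" by (simp add: op_add_def)
lemma op_scale_apply[simp]: "op_scale c X x = scaleC c (X x)" by (simp add: op_scale_def)

lemma BH_I:
  assumes "\<And>x y. T (x + y) = T x + T y" "\<And>c x. T (scaleC c x) = scaleC c (T x)"
    "\<And>x. norm (T x) \<le> norm x * K"
  shows "T \<in> BH"
  unfolding BH_def using assms by blast

lemma BH_op_add: assumes X: "X \<in> BH" and Y: "Y \<in> BH"
  shows "op_add X Y \<in> (BH::('a::chilbert_space \<Rightarrow> 'a) set)"
proof -
  obtain K1 where K1: "\<forall>x. norm (X x) \<le> norm x * K1" using BH_bound[OF X] by blast
  obtain K2 where K2: "\<forall>x. norm (Y x) \<le> norm x * K2" using BH_bound[OF Y] by blast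
  show ?thesis
  proof (rule BH_I)
    show "op_add X Y (x + y) = op_add X Y x + op_add X Y y" for x y
      by (simp add: BH_add_apply[OF X] BH_add_apply[OF Y] add_ac)
    show "op_add X Y (scaleC c x) = scaleC c (op_add X Y x)" for c x
      by (simp add: BH_scale_apply[OF X] BH_scale_apply[OF Y] scaleC_add_right)
    show "norm (op_add X Y x) \<le> norm x * (K1 + K2)" for x
    proof -
      have "norm (X x + Y x) \<le> norm (X x) + norm (Y x)" by (rule norm_triangle_ineq)
      also have "\<dots> \<le> norm x * K1 + norm x * K2" using K1 K2 by (intro add_mono) auto
      finally show ?thesis by (simp add: distrib_left)
    qed
  qed
qed

lemma BH_op_scale: assumes X: "X \<in> BH"
  shows "op_scale c X \<in> (BH::('a::chilbert_space \<Rightarrow> 'a) set)"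
proof -
  obtain K where K: "\<forall>x. norm (X x) \<le> norm x * K" using BH_bound[OF X] by blast
  show ?thesis
  proof (rule BH_I)
    show "op_scale c X (x + y) = op_scale c X x + op_scale c X y" for x y
      by (simp add: BH_add_apply[OF X] scaleC_add_right)
    show "op_scale c X (scaleC d x) = scaleC d (op_scale c X x)" for d x
      by (simp add: BH_scale_apply[OF X] scaleC_scaleC mult.commute)
    show "norm (op_scale c X x) \<le> norm x * (cmod c * K)" for x
    proof -
      have "norm (op_scale c X x) = cmod c * norm (X x)" by (simp add: norm_scaleC)
      also have "\<dots> \<le> cmod c * (norm x * K)" using K by (intro mult_left_mono) auto
      finally show ?thesis by (simp add: mult_ac)
    qed
  qed
qed

lemma BH_comp: assumes X: "X \<in> BH" and Y: "Y \<in> BH"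
  shows "X \<circ> Y \<in> (BH::('a::chilbert_space \<Rightarrow> 'a) set)"
proof -
  obtain K1 where K1: "K1 \<ge> 0" "\<forall>x. norm (X x) \<le> norm x * K1" using BH_bound[OF X] by blast
  obtain K2 where K2: "\<forall>x. norm (Y x) \<le> norm x * K2" using BH_bound[OF Y] by blast
  show ?thesis
  proof (rule BH_I)
    show "(X \<circ> Y) (x + y) = (X \<circ> Y) x + (X \<circ> Y) y" for x y
      by (simp add: BH_add_apply[OF X] BH_add_apply[OF Y])
    show "(X \<circ> Y) (scaleC c x) = scaleC c ((X \<circ> Y) x)" for c x
      by (simp add: BH_scale_apply[OF X] BH_scale_apply[OF Y])
    show "norm ((X \<circ> Y) x) \<le> norm x * (K2 * K1)" for x
    proof -
      have "norm (X (Y x)) \<le> norm (Y x) * K1" using K1 by simp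
      also have "\<dots> \<le> norm x * K2 * K1" using K2 K1(1) by (simp add: mult_right_mono)
      finally show ?thesis by (simp add: mult.assoc)
    qed
  qed
qed

lemma adj_exists:
  assumes T: "T \<in> BH"
  shows "\<exists>S\<in>BH. \<forall>x y. cinner (T x) y = cinner x (S y :: 'a::chilbert_space)"
proof -
  obtain K where K0: "K \<ge> 0" and K: "\<forall>x. norm (T x) \<le> norm x * K" using BH_bound[OF T] by blast
  have "\<exists>z. \<forall>x. cinner y (T x) = cinner z x" for y
  proof (rule riesz[where K="norm y * K"])
    show "cinner y (T (a + b)) = cinner y (T a) + cinner y (T b)" for a b
      using T by (simp add: BH_add_apply ci_add_right)
    show "cinner y (T (scaleC c a)) = c * cinner y (T a)" for c a
      using T by (simp add: BH_scale_apply ci_scale_right)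
    show "Re (cinner y (T a)) \<le> norm y * K * norm a" for a
    proof -
      have "Re (cinner y (T a)) \<le> norm y * norm (T a)" using CS_Re[of y "T a"] by linarith
      also have "\<dots> \<le> norm y * (norm a * K)" using K by (simp add: mult_left_mono)
      finally show ?thesis by (simp add: algebra_simps)
    qed
  qed
  then obtain S where S: "\<forall>y x. cinner y (T x) = cinner (S y) x"
    using choice[of "\<lambda>y z. \<forall>x. cinner y (T x) = cinner z x"] by blast
  have adjS: "cinner (T x) y = cinner x (S y)" for x y
    using cinner_commute[of "T x" y] cinner_commute[of x "S y"] S by simp
  have Sadd: "S (a + b) = S a + S b" for a b
    by (rule ci_eqI) (simp add: S[rule_format, symmetric] cinner_add_left)
  have Ssc: "S (scaleC c a) = scaleC c (S a)" for c a
    by (rule ci_eqI) (simp add: S[rule_format, symmetric] cinner_scaleC_left)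
  have Sb: "norm (S y) \<le> norm y * K" for y
  proof (cases "norm (S y) = 0")
    case True then show ?thesis using K0 by simp
  next
    case False
    have "(norm (S y))\<^sup>2 = Re (cinner y (T (S y)))" using S by (simp add: norm_sq_ci)
    also have "\<dots> \<le> norm y * norm (T (S y))" using CS_Re[of y "T (S y)"] by linarith
    also have "\<dots> \<le> norm y * (norm (S y) * K)" using K by (simp add: mult_left_mono)
    finally have "norm (S y) * norm (S y) \<le> (norm y * K) * norm (S y)"
      by (simp add: power2_eq_square algebra_simps)
    then show ?thesis using False by (simp add: mult_le_cancel_right)
  qed
  have "S \<in> BH" unfolding BH_def using Sadd Ssc Sb by blast
  then show ?thesis using adjS by blast
qed

lemma adj_unique_aux:
  "(\<And>x y. cinner x (S1 y) = cinner x (S2 y :: 'a::chilbert_space)) \<Longrightarrow> S1 = S2"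
proof
  fix y assume h: "\<And>x y. cinner x (S1 y) = cinner x (S2 y)"
  show "S1 y = S2 y"
    by (rule ci_eqI) (simp add: h[of _ y] cinner_commute[of "S1 y"] cinner_commute[of "S2 y"])
qed

lemma adj_prop:
  assumes T: "T \<in> BH"
  shows "adj T \<in> BH \<and> (\<forall>x y. cinner (T x) y = cinner x (adj T y :: 'a::chilbert_space))"
proof -
  have "\<exists>!S. S \<in> BH \<and> (\<forall>x y. cinner (T x) y = cinner x (S y))"
  proof (rule ex_ex1I)
    show "\<exists>S. S \<in> BH \<and> (\<forall>x y. cinner (T x) y = cinner x (S y))" using adj_exists[OF T] by blast
    show "S1 = S2" if "S1 \<in> BH \<and> (\<forall>x y. cinner (T x) y = cinner x (S1 y))"
      and "S2 \<in> BH \<and> (\<forall>x y. cinner (T x) y = cinner x (S2 y))" for S1 S2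
      using that by (intro adj_unique_aux) metis
  qed
  then show ?thesis unfolding adj_def by (rule theI')
qed

lemma adj_BH: "T \<in> BH \<Longrightarrow> adj T \<in> BH" using adj_prop by blast
lemma adj_inner: "T \<in> BH \<Longrightarrow> cinner (T x) y = cinner x (adj T y :: 'a::chilbert_space)" using adj_prop by blast

lemma adj_eq:
  assumes "T \<in> BH" "\<And>x y. cinner (T x) y = cinner x (S y :: 'a::chilbert_space)"
  shows "adj T = S"
  by (rule adj_unique_aux) (simp add: adj_inner[OF assms(1), symmetric] assms(2))

lemma adj_op_add: assumes X: "X \<in> BH" and Y: "Y \<in> BH"
  shows "adj (op_add X Y) = op_add (adj X) (adj (Y::'a::chilbert_space \<Rightarrow> 'a))"
  by (rule adj_eq) (simp_all add: BH_op_add X Y cinner_add_left ci_add_right adj_inner[OF X] adj_inner[OF Y])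

lemma adj_op_scale: assumes X: "X \<in> BH"
  shows "adj (op_scale c X) = op_scale (cnj c) (adj (X::'a::chilbert_space \<Rightarrow> 'a))"
  by (rule adj_eq) (simp_all add: BH_op_scale X cinner_scaleC_left ci_scale_right adj_inner[OF X])

lemma sc_two: "scaleC 2 (z::'a::chilbert_space) = z + z"
  using scaleC_add_left[of 1 1 z] by (simp add: scaleC_one)

lemma sc_lin2: "scaleC p a + scaleC q b + (scaleC r a + scaleC s (b::'a::chilbert_space)) = scaleC (p + r) a + scaleC (q + s) b"
  by (simp add: scaleC_add_left add_ac)

lemma ReOp_apply: "X \<in> BH \<Longrightarrow> ReOp X x = scaleC (1/2) (X x + adj X x)"
  by (simp add: ReOp_def)

lemma ReOp_BH: "X \<in> BH \<Longrightarrow> ReOp X \<in> BH"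
  unfolding ReOp_def by (intro BH_op_scale BH_op_add adj_BH)

context
  fixes N :: "('a::chilbert_space \<Rightarrow> 'a) \<Rightarrow> real"
  assumes nrm: "is_norm_on_BH N" and sa: "\<forall>X\<in>BH. N (adj X) = N X"
begin

lemma N_nonneg: "X \<in> BH \<Longrightarrow> 0 \<le> N X" using nrm by (simp add: is_norm_on_BH_def)
lemma N_scale: "X \<in> BH \<Longrightarrow> N (op_scale c X) = cmod c * N X" using nrm by (simp add: is_norm_on_BH_def)
lemma N_tri: "X \<in> BH \<Longrightarrow> Y \<in> BH \<Longrightarrow> N (op_add X Y) \<le> N X + N Y" using nrm by (simp add: is_norm_on_BH_def)

lemma N_ReOp: assumes X: "X \<in> BH" shows "N (ReOp X) \<le> N X"
proof -
  have "N (ReOp X) = cmod (1/2) * N (op_add X (adj X))"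
    unfolding ReOp_def by (rule N_scale) (intro BH_op_add X adj_BH)
  also have "\<dots> \<le> (1/2) * (N X + N (adj X))"
    using N_tri[OF X adj_BH[OF X]] by simp
  also have "\<dots> = N X" using sa X by simp
  finally show ?thesis .
qed

lemma wN_term_le: assumes X: "X \<in> BH" shows "N (ReOp (op_scale (cis t) X)) \<le> N X"
proof -
  have "N (ReOp (op_scale (cis t) X)) \<le> N (op_scale (cis t) X)" by (intro N_ReOp BH_op_scale X)
  also have "\<dots> = N X" using N_scale[OF X] by simp
  finally show ?thesis .
qed

lemma wN_upper: assumes X: "X \<in> BH" shows "N (ReOp (op_scale (cis t) X)) \<le> wN N X"
  unfolding wN_def
proof (rule cSUP_upper)
  show "bdd_above (range (\<lambda>t. N (ReOp (op_scale (cis t) X))))"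
    using wN_term_le[OF X] by (intro bdd_aboveI2) 
qed simp

lemma wN_least: "(\<And>t. N (ReOp (op_scale (cis t) X)) \<le> b) \<Longrightarrow> wN N X \<le> b"
  unfolding wN_def by (rule cSUP_least) auto

lemma wN_le_N: "X \<in> BH \<Longrightarrow> wN N X \<le> N X"
  by (intro wN_least wN_term_le)

lemma wN_nonneg: assumes X: "X \<in> BH" shows "0 \<le> wN N X"
proof -
  have "0 \<le> N (ReOp (op_scale (cis 0) X))" by (intro N_nonneg ReOp_BH BH_op_scale X)
  also have "\<dots> \<le> wN N X" by (rule wN_upper[OF X])
  finally show ?thesis .
qed

lemma N_le_2wN: assumes X: "X \<in> BH" shows "N X \<le> 2 * wN N X"
proof -
  define R1 where "R1 = ReOp (op_scale (cis 0) X)"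
  define R2 where "R2 = ReOp (op_scale (cis (- (pi/2))) X)"
  have ci: "cis (- (pi/2)) = - \<i>" by (simp add: complex_eq_iff)
  have R1B: "R1 \<in> BH" unfolding R1_def by (intro ReOp_BH BH_op_scale X)
  have R2B: "R2 \<in> BH" unfolding R2_def by (intro ReOp_BH BH_op_scale X)
  have eq: "X = op_add R1 (op_scale \<i> R2)"
  proof (rule ext)
    fix x
    have "op_add R1 (op_scale \<i> R2) x
       = scaleC (1/2) (X x) + scaleC (1/2) (adj X x) + (scaleC (\<i> * (1/2 * - \<i>)) (X x) + scaleC (\<i> * (1/2 * \<i>)) (adj X x))"
      unfolding R1_def R2_def ci
      by (simp add: ReOp_apply BH_op_scale X adj_op_scale scaleC_add_right scaleC_scaleC scaleC_one)
    also have "\<dots> = scaleC (1/2 + \<i> * (1/2 * - \<i>)) (X x) + scaleC (1/2 + \<i> * (1/2 * \<i>)) (adj X x)"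
      by (rule sc_lin2)
    also have "\<dots> = X x" by (simp add: scaleC_one)
    finally show "X x = op_add R1 (op_scale \<i> R2) x" by simp
  qed
  have "N X \<le> N R1 + N (op_scale \<i> R2)" by (subst eq) (intro N_tri R1B BH_op_scale R2B)
  also have "\<dots> = N R1 + N R2" using N_scale[OF R2B] by simp
  also have "\<dots> \<le> wN N X + wN N X" unfolding R1_def R2_def by (intro add_mono wN_upper X)
  finally show ?thesis by simp
qed

lemma wN_add: assumes X: "X \<in> BH" and Y: "Y \<in> BH"
  shows "wN N (op_add X Y) \<le> wN N X + wN N Y"
proof (rule wN_least)
  fix t
  have eq: "ReOp (op_scale (cis t) (op_add X Y)) = op_add (ReOp (op_scale (cis t) X)) (ReOp (op_scale (cis t) Y))"
    by (rule ext) (simp add: ReOp_apply BH_op_scale BH_op_add X Y adj_op_scale adj_op_add scaleC_add_right add_ac)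
  have "N (ReOp (op_scale (cis t) (op_add X Y))) \<le> N (ReOp (op_scale (cis t) X)) + N (ReOp (op_scale (cis t) Y))"
    unfolding eq by (intro N_tri ReOp_BH BH_op_scale X Y)
  also have "\<dots> \<le> wN N X + wN N Y" by (intro add_mono wN_upper X Y)
  finally show "N (ReOp (op_scale (cis t) (op_add X Y))) \<le> wN N X + wN N Y" .
qed

lemma wN_neg: assumes X: "X \<in> BH" shows "wN N (op_scale (-1) X) \<le> wN N X"
proof (rule wN_least)
  fix t
  have c: "cis (t + pi) = - cis t" by (simp add: complex_eq_iff)
  have "op_scale (cis t) (op_scale (-1) X) = op_scale (cis (t + pi)) X"
    by (rule ext) (simp add: c scaleC_scaleC)
  then show "N (ReOp (op_scale (cis t) (op_scale (-1) X))) \<le> wN N X" using wN_upper[OF X, of "t + pi"] by simp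
qed

lemma wN_scale_ge: assumes s: "s > 0" and X: "X \<in> BH"
  shows "s * wN N X \<le> wN N (op_scale (complex_of_real s) X)"
proof -
  have "wN N X \<le> wN N (op_scale (complex_of_real s) X) / s"
  proof (rule wN_least)
    fix t
    have eq: "ReOp (op_scale (cis t) (op_scale (complex_of_real s) X)) = op_scale (complex_of_real s) (ReOp (op_scale (cis t) X))"
      by (rule ext) (simp add: ReOp_apply BH_op_scale X adj_op_scale scaleC_add_right scaleC_scaleC mult_ac)
    have "s * N (ReOp (op_scale (cis t) X)) = N (ReOp (op_scale (cis t) (op_scale (complex_of_real s) X)))"
      unfolding eq using N_scale[OF ReOp_BH[OF BH_op_scale[OF X]], of "complex_of_real s" "cis t"] s by simp
    also have "\<dots> \<le> wN N (op_scale (complex_of_real s) X)" by (intro wN_upper BH_op_scale X)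
    finally show "N (ReOp (op_scale (cis t) X)) \<le> wN N (op_scale (complex_of_real s) X) / s"
      using s by (simp add: field_simps)
  qed
  then show ?thesis using s by (simp add: field_simps)
qed

lemma wNe_ge:
  assumes B: "B \<in> BH" and C: "C \<in> BH" and l: "(cmod l1)\<^sup>2 + (cmod l2)\<^sup>2 \<le> 1"
  shows "wN N (op_add (op_scale l1 B) (op_scale l2 C)) \<le> wNe N B C"
proof -
  define S where "S = {(l1, l2). (cmod l1)\<^sup>2 + (cmod l2)\<^sup>2 \<le> (1::real)}"
  define F where "F l = wN N (op_add (op_scale (fst l) B) (op_scale (snd l) C))" for l
  have bd: "F l \<le> N B + N C" if "l \<in> S" for l
  proof -
    obtain m1 m2 where lm: "l = (m1, m2)" by fastforce
    have m: "(cmod m1)\<^sup>2 + (cmod m2)\<^sup>2 \<le> 1" using that lm S_def by simp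
    have "(cmod m1)\<^sup>2 \<le> 1" using m zero_le_power2[of "cmod m2"] by linarith
    then have m1: "cmod m1 \<le> 1" using power2_le_imp_le[of "cmod m1" 1] by simp
    have "(cmod m2)\<^sup>2 \<le> 1" using m zero_le_power2[of "cmod m1"] by linarith
    then have m2: "cmod m2 \<le> 1" using power2_le_imp_le[of "cmod m2" 1] by simp
    have "F l \<le> N (op_add (op_scale m1 B) (op_scale m2 C))"
      unfolding F_def lm fst_conv snd_conv by (rule wN_le_N) (intro BH_op_add BH_op_scale B C)
    also have "\<dots> \<le> N (op_scale m1 B) + N (op_scale m2 C)" by (intro N_tri BH_op_scale B C)
    also have "\<dots> = cmod m1 * N B + cmod m2 * N C" by (simp add: N_scale B C)
    also have "\<dots> \<le> 1 * N B + 1 * N C"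
      using m1 m2 N_nonneg[OF B] N_nonneg[OF C] by (intro add_mono mult_right_mono) auto
    finally show ?thesis by simp
  qed
  have "F (l1, l2) \<le> (SUP l\<in>S. F l)"
  proof (rule cSUP_upper)
    show "(l1, l2) \<in> S" using l by (simp add: S_def)
    show "bdd_above (F ` S)" by (rule bdd_aboveI2[where M="N B + N C"]) (rule bd)
  qed
  moreover have "wNe N B C = (SUP l\<in>S. F l)" unfolding wNe_def F_def wN_def S_def ..
  ultimately show ?thesis unfolding F_def by simp
qed

end

end

theorem theorem2p14:
  fixes N :: "('a::chilbert_space \<Rightarrow> 'a) \<Rightarrow> real"
    and B C :: "'a \<Rightarrow> 'a"
  assumes norm: "is_norm_on_BH N"
    and algebra: "\<forall>X\<in>BH. \<forall>Y\<in>BH. N (X \<circ> Y) \<le> N X * N Y"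
    and selfadj: "\<forall>X\<in>BH. N (adj X) = N X"
    and B: "B \<in> BH" and C: "C \<in> BH"
  shows "(1/8) * N (op_add (adj C \<circ> C) (adj B \<circ> B))
           + (1/2) * max (wN N B) (wN N C) * \<bar>wN N (op_add B C) - wN N (op_add B (op_scale (-1) C))\<bar>
         \<le> (wNe N B C)\<^sup>2"
proof -
  define P where "P = op_add B C"
  define Q where "Q = op_add B (op_scale (-1) C)"
  define a where "a = wN N P"
  define b where "b = wN N Q"
  define W where "W = wNe N B C"
  define M where "M = max (wN N B) (wN N C)"
  have PB: "P \<in> BH" unfolding P_def by (intro BH_op_add B C)
  have QB: "Q \<in> BH" unfolding Q_def by (intro BH_op_add BH_op_scale B C)
  have aB: "adj B \<in> BH" and aC: "adj C \<in> BH" using adj_BH B C by auto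
  have adjP: "adj P = op_add (adj B) (adj C)" unfolding P_def by (rule adj_op_add[OF B C])
  have adjQ: "adj Q = op_add (adj B) (op_scale (-1) (adj C))"
    unfolding Q_def using adj_op_add[OF B BH_op_scale[OF C]] adj_op_scale[OF C] by simp
  have aPB: "adj P \<in> BH" and aQB: "adj Q \<in> BH" using adj_BH PB QB by auto
  define Z where "Z = op_add (adj C \<circ> C) (adj B \<circ> B)"
  have ZB: "Z \<in> BH" unfolding Z_def by (intro BH_op_add BH_comp aB aC B C)
  have id: "op_add (adj P \<circ> P) (adj Q \<circ> Q) = op_scale 2 Z"
  proof (rule ext)
    fix x
    show "op_add (adj P \<circ> P) (adj Q \<circ> Q) x = op_scale 2 Z x"
      unfolding o_def op_add_apply adjP adjQ unfolding Z_def P_def Q_def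
      by (simp add: BH_add_apply[OF aB] BH_add_apply[OF aC] BH_minus[OF aB] BH_minus[OF aC] BH_diff[OF aB] BH_diff[OF aC]
          sc_minus1 sc_two algebra_simps)
  qed
  have n1: "2 * N Z \<le> (N P)\<^sup>2 + (N Q)\<^sup>2"
  proof -
    have "2 * N Z = N (op_scale 2 Z)" using N_scale[OF norm selfadj ZB, of 2] by simp
    also have "\<dots> = N (op_add (adj P \<circ> P) (adj Q \<circ> Q))" by (simp add: id)
    also have "\<dots> \<le> N (adj P \<circ> P) + N (adj Q \<circ> Q)" by (intro N_tri[OF norm selfadj] BH_comp aPB aQB PB QB)
    also have "\<dots> \<le> N (adj P) * N P + N (adj Q) * N Q"
      using algebra aPB aQB PB QB by (intro add_mono) auto
    also have "\<dots> = (N P)\<^sup>2 + (N Q)\<^sup>2" using selfadj PB QB by (simp add: power2_eq_square)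
    finally show ?thesis .
  qed
  have NP: "N P \<le> 2 * a" "0 \<le> N P" unfolding a_def using N_le_2wN[OF norm selfadj PB] N_nonneg[OF norm selfadj PB] by auto
  have NQ: "N Q \<le> 2 * b" "0 \<le> N Q" unfolding b_def using N_le_2wN[OF norm selfadj QB] N_nonneg[OF norm selfadj QB] by auto
  have a0: "0 \<le> a" unfolding a_def by (rule wN_nonneg[OF norm selfadj PB])
  have b0: "0 \<le> b" unfolding b_def by (rule wN_nonneg[OF norm selfadj QB])
  have NP2: "(N P)\<^sup>2 \<le> (2 * a)\<^sup>2" using NP by (intro power_mono) auto
  have NQ2: "(N Q)\<^sup>2 \<le> (2 * b)\<^sup>2" using NQ by (intro power_mono) auto
  have t1: "(1/8) * N Z \<le> (a\<^sup>2 + b\<^sup>2) / 4" using n1 NP2 NQ2 by (simp add: power_mult_distrib)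
  have wB: "2 * wN N B \<le> a + b"
  proof -
    have e: "op_add P Q = op_scale (complex_of_real 2) B"
      by (rule ext) (simp add: P_def Q_def sc_minus1 sc_two)
    have "2 * wN N B \<le> wN N (op_scale (complex_of_real 2) B)" by (rule wN_scale_ge[OF norm selfadj _ B]) simp
    also have "\<dots> = wN N (op_add P Q)" by (simp add: e)
    also have "\<dots> \<le> a + b" unfolding a_def b_def by (rule wN_add[OF norm selfadj PB QB])
    finally show ?thesis .
  qed
  have wC: "2 * wN N C \<le> a + b"
  proof -
    have e: "op_add P (op_scale (-1) Q) = op_scale (complex_of_real 2) C"
      by (rule ext) (simp add: P_def Q_def sc_minus1 sc_two)
    have "2 * wN N C \<le> wN N (op_scale (complex_of_real 2) C)" by (rule wN_scale_ge[OF norm selfadj _ C]) simp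
    also have "\<dots> = wN N (op_add P (op_scale (-1) Q))" by (simp add: e)
    also have "\<dots> \<le> a + wN N (op_scale (-1) Q)" unfolding a_def by (rule wN_add[OF norm selfadj PB BH_op_scale[OF QB]])
    also have "\<dots> \<le> a + b" unfolding b_def using wN_neg[OF norm selfadj QB] by simp
    finally show ?thesis .
  qed
  have M2: "2 * M \<le> a + b" unfolding M_def using wB wC by simp
  have M0: "0 \<le> M" unfolding M_def using wN_nonneg[OF norm selfadj B] by simp
  define r where "r = 1 / sqrt (2::real)"
  have r0: "0 < r" unfolding r_def by simp
  have rr: "r\<^sup>2 = 1/2" unfolding r_def by (simp add: power_divide)
  have lcond1: "(cmod (complex_of_real r))\<^sup>2 + (cmod (complex_of_real r))\<^sup>2 \<le> 1" using rr by simp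
  have lcond2: "(cmod (complex_of_real r))\<^sup>2 + (cmod (- complex_of_real r))\<^sup>2 \<le> 1" using rr by simp
  have Wa: "r * a \<le> W"
  proof -
    have e: "op_add (op_scale (complex_of_real r) B) (op_scale (complex_of_real r) C) = op_scale (complex_of_real r) P"
      by (rule ext) (simp add: P_def scaleC_add_right)
    have "r * a \<le> wN N (op_scale (complex_of_real r) P)" unfolding a_def by (rule wN_scale_ge[OF norm selfadj r0 PB])
    also have "\<dots> \<le> W" unfolding W_def using wNe_ge[OF norm selfadj B C lcond1] e by simp
    finally show ?thesis .
  qed
  have Wb: "r * b \<le> W"
  proof -
    have e: "op_add (op_scale (complex_of_real r) B) (op_scale (- complex_of_real r) C) = op_scale (complex_of_real r) Q"
      by (rule ext) (simp add: Q_def scaleC_add_right scaleC_scaleC)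
    have "r * b \<le> wN N (op_scale (complex_of_real r) Q)" unfolding b_def by (rule wN_scale_ge[OF norm selfadj r0 QB])
    also have "\<dots> \<le> W" unfolding W_def using wNe_ge[OF norm selfadj B C lcond2] e by simp
    finally show ?thesis .
  qed
  have Wa2: "a\<^sup>2 / 2 \<le> W\<^sup>2"
  proof -
    have "(r * a)\<^sup>2 \<le> W\<^sup>2" using Wa r0 a0 by (intro power_mono) auto
    then show ?thesis using rr by (simp add: power_mult_distrib)
  qed
  have Wb2: "b\<^sup>2 / 2 \<le> W\<^sup>2"
  proof -
    have "(r * b)\<^sup>2 \<le> W\<^sup>2" using Wb r0 b0 by (intro power_mono) auto
    then show ?thesis using rr by (simp add: power_mult_distrib)
  qed
  have t2: "(1/2) * M * \<bar>a - b\<bar> \<le> (a + b) * \<bar>a - b\<bar> / 4"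
  proof -
    have "(2 * M) * \<bar>a - b\<bar> \<le> (a + b) * \<bar>a - b\<bar>" using M2 by (intro mult_right_mono) auto
    then show ?thesis by simp
  qed
  have fin: "(a\<^sup>2 + b\<^sup>2) / 4 + (a + b) * \<bar>a - b\<bar> / 4 \<le> W\<^sup>2"
  proof (cases "b \<le> a")
    case True
    then have "(a + b) * \<bar>a - b\<bar> = a\<^sup>2 - b\<^sup>2" by (simp add: power2_eq_square algebra_simps)
    then show ?thesis using Wa2 by (simp add: field_simps)
  next
    case False
    then have "(a + b) * \<bar>a - b\<bar> = b\<^sup>2 - a\<^sup>2" by (simp add: power2_eq_square algebra_simps)
    then show ?thesis using Wb2 by (simp add: field_simps)
  qed
  have "(1/8) * N Z + (1/2) * M * \<bar>a - b\<bar> \<le> W\<^sup>2" using t1 t2 fin by linarith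
  then show ?thesis unfolding Z_def M_def a_def b_def W_def P_def Q_def .
qed

end
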